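(* Let $S$ be a left Fountain-Gould order in an inverse semigroup $Q$. Then $S$ is a straight left I-order in $Q$.
   Context: For $a$ in a semigroup $Q$ lying in a subgroup of $Q$, $a^{\sharp}$ denotes its inverse in the maximal subgroup containing it; in an inverse semigroup $a^{-1}$ denotes the unique inverse of $a$. An element $a$ of a semigroup $S$ is square-cancellable if $a\,\mathcal{H}^*\,a^2$, i.e. for all $x,y\in S^1$, $xa=ya\Leftrightarrow xa^2=ya^2$ and $ax=ay\Leftrightarrow a^2x=a^2y$. A subsemigroup $S$ of a semigroup $Q$ is a left Fountain-Gould order in $Q$ if every $q\in Q$ can be written $q=a^{\sharp}b$ with $a,b\in S$ and $a$ lying in a subgroup of $Q$, and every square-cancellable element of $S$ lies in a subgroup of $Q$. A subsemigroup $S$ of an inverse semigroup $Q$ is a straight left I-order in $Q$ if every $q\in Q$ can be written $q=a^{-1}b$ with $a,b\in S$ and $a\,\mathcal{R}\,b$ in $Q$. *)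

theory Defs
  imports Main
begin

text \<open>The ambient semigroup Q is the whole type 'a (class semigroup_mult).
  Subsemigroups are subsets closed under multiplication.\<close>

definition subsemigroup :: "'a::semigroup_mult set \<Rightarrow> bool" where
  "subsemigroup S \<longleftrightarrow> (\<forall>x\<in>S. \<forall>y\<in>S. x * y \<in> S)"

definition subgroup_with_identity :: "'a::semigroup_mult set \<Rightarrow> 'a \<Rightarrow> bool" where
  "subgroup_with_identity G e \<longleftrightarrow>
     e \<in> G \<and> subsemigroup G \<and> (\<forall>x\<in>G. e * x = x \<and> x * e = x) \<and>
     (\<forall>x\<in>G. \<exists>y\<in>G. x * y = e \<and> y * x = e)"

definition is_subgroup :: "'a::semigroup_mult set \<Rightarrow> bool" where
  "is_subgroup G \<longleftrightarrow> (\<exists>e. subgroup_with_identity G e)"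

definition in_subgroup :: "'a::semigroup_mult \<Rightarrow> bool" where
  "in_subgroup a \<longleftrightarrow> (\<exists>G. is_subgroup G \<and> a \<in> G)"

text \<open>a^sharp: the group inverse of a (its inverse in a subgroup containing a;
  this coincides with its inverse in the maximal subgroup containing a).\<close>
definition sharp :: "'a::semigroup_mult \<Rightarrow> 'a" where
  "sharp a = (THE b. \<exists>G e. subgroup_with_identity G e \<and> a \<in> G \<and> b \<in> G \<and> a * b = e \<and> b * a = e)"

definition inverse_semigroup :: "'a::semigroup_mult itself \<Rightarrow> bool" where
  "inverse_semigroup _ \<longleftrightarrow> (\<forall>a::'a. \<exists>!b. a * b * a = a \<and> b * a * b = b)"

definition sinv :: "'a::semigroup_mult \<Rightarrow> 'a" where
  "sinv a = (THE b. a * b * a = a \<and> b * a * b = b)"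

text \<open>Multiplication by elements of S^1, with None standing for the adjoined identity.\<close>
fun lmult :: "'a::semigroup_mult option \<Rightarrow> 'a \<Rightarrow> 'a" where
  "lmult None a = a"
| "lmult (Some x) a = x * a"

fun rmult :: "'a::semigroup_mult \<Rightarrow> 'a option \<Rightarrow> 'a" where
  "rmult a None = a"
| "rmult a (Some x) = a * x"

definition one_adj :: "'a set \<Rightarrow> 'a option set" where
  "one_adj S = insert None (Some ` S)"

text \<open>a is square-cancellable in S: a H* a^2 in S.\<close>
definition square_cancellable :: "'a::semigroup_mult set \<Rightarrow> 'a \<Rightarrow> bool" where
  "square_cancellable S a \<longleftrightarrow>
     (\<forall>x\<in>one_adj S. \<forall>y\<in>one_adj S.
        (lmult x a = lmult y a \<longleftrightarrow> lmult x (a * a) = lmult y (a * a)) \<and>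
        (rmult a x = rmult a y \<longleftrightarrow> rmult (a * a) x = rmult (a * a) y))"

definition left_FG_order :: "'a::semigroup_mult set \<Rightarrow> bool" where
  "left_FG_order S \<longleftrightarrow> subsemigroup S \<and>
     (\<forall>q::'a. \<exists>a\<in>S. \<exists>b\<in>S. in_subgroup a \<and> q = sharp a * b) \<and>
     (\<forall>a\<in>S. square_cancellable S a \<longrightarrow> in_subgroup a)"

definition greenR :: "'a::semigroup_mult \<Rightarrow> 'a \<Rightarrow> bool" where
  "greenR a b \<longleftrightarrow> (\<exists>x. a = rmult b x) \<and> (\<exists>y. b = rmult a y)"

definition straight_left_I_order :: "'a::semigroup_mult set \<Rightarrow> bool" where
  "straight_left_I_order S \<longleftrightarrow> subsemigroup S \<and>
     (\<forall>q::'a. \<exists>a\<in>S. \<exists>b\<in>S. q = sinv a * b \<and> greenR a b)"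

end

theory Submission
  imports Defs
begin


lemma sinv_prop:
  assumes "inverse_semigroup TYPE('a::semigroup_mult)"
  shows "(a::'a) * sinv a * a = a \<and> sinv a * a * sinv a = sinv a"
proof -
  have "\<exists>!b. a * b * a = a \<and> b * a * b = b" using assms unfolding inverse_semigroup_def by blast
  then show ?thesis unfolding sinv_def by (rule theI')
qed

lemma sinv_unique:
  assumes "inverse_semigroup TYPE('a::semigroup_mult)"
    and "(a::'a) * b * a = a" "b * a * b = b"
  shows "sinv a = b"
proof -
  have "\<exists>!b. a * b * a = a \<and> b * a * b = b" using assms unfolding inverse_semigroup_def by blast
  then show ?thesis unfolding sinv_def using the1_equality[of "\<lambda>b. a * b * a = a \<and> b * a * b = b" b] assms(2,3) by blast
qed

lemma sinv_sinv:
  assumes "inverse_semigroup TYPE('a::semigroup_mult)"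
  shows "sinv (sinv (a::'a)) = a"
  using sinv_unique[OF assms] sinv_prop[OF assms, of a] by blast

lemma idem_sinv:
  assumes "inverse_semigroup TYPE('a::semigroup_mult)" "(x::'a) * x = x"
  shows "sinv x = x"
  using sinv_unique[OF assms(1), of x x] assms(2) by simp

lemma idem_prod:
  assumes I: "inverse_semigroup TYPE('a::semigroup_mult)"
    and E: "(e::'a) * e = e" and F: "f * f = f"
  shows "e * f * (e * f) = e * f"
proof -
  define x where "x = sinv (e * f)"
  have x1: "e * f * x * (e * f) = e * f" and x2: "x * (e * f) * x = x"
    using sinv_prop[OF I, of "e*f"] unfolding x_def by auto
  have a1: "e * f * (f * x * e) * (e * f) = e * f"
    using x1 E F by (metis mult.assoc)
  have a2: "(f * x * e) * (e * f) * (f * x * e) = f * x * e"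
    using x2 E F by (metis mult.assoc)
  have "sinv (e * f) = f * x * e" using sinv_unique[OF I a1 a2] .
  hence xe: "x = f * x * e" unfolding x_def .
  have "x * x = x"
  proof -
    have "x * x = f * x * e * (f * x * e)" using xe by metis
    also have "\<dots> = f * (x * (e * f) * x) * e" by (simp add: mult.assoc)
    also have "\<dots> = x" using x2 xe by simp
    finally show ?thesis .
  qed
  hence "sinv x = x" using idem_sinv[OF I] by blast
  hence "e * f = x" using sinv_sinv[OF I, of "e*f"] unfolding x_def by simp
  thus ?thesis using \<open>x * x = x\<close> by simp
qed

lemma idem_comm:
  assumes I: "inverse_semigroup TYPE('a::semigroup_mult)"
    and E: "(e::'a) * e = e" and F: "f * f = f"
  shows "e * f = f * e"
proof -
  have ef: "e * f * (e * f) = e * f" using idem_prod[OF I E F] .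
  have fe: "f * e * (f * e) = f * e" using idem_prod[OF I F E] .
  have b1: "e * f * (f * e) * (e * f) = e * f"
    by (metis ef E F mult.assoc)
  have b2: "f * e * (e * f) * (f * e) = f * e"
    by (metis fe E F mult.assoc)
  have "sinv (e * f) = f * e" using sinv_unique[OF I b1 b2] .
  moreover have "sinv (e * f) = e * f" using idem_sinv[OF I ef] .
  ultimately show ?thesis by simp
qed

lemma sinv_mult:
  assumes I: "inverse_semigroup TYPE('a::semigroup_mult)"
  shows "sinv ((x::'a) * y) = sinv y * sinv x"
proof -
  have px: "x * sinv x * x = x" "sinv x * x * sinv x = sinv x" using sinv_prop[OF I] by auto
  have py: "y * sinv y * y = y" "sinv y * y * sinv y = sinv y" using sinv_prop[OF I] by auto
  have e1: "(sinv x * x) * (sinv x * x) = sinv x * x" using px by (metis mult.assoc)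
  have e2: "(y * sinv y) * (y * sinv y) = y * sinv y" using py by (metis mult.assoc)
  have c: "(sinv x * x) * (y * sinv y) = (y * sinv y) * (sinv x * x)"
    using idem_comm[OF I e1 e2] .
  have "x * y * (sinv y * sinv x) * (x * y) = x * ((y * sinv y) * (sinv x * x)) * y"
    by (simp add: mult.assoc)
  also have "\<dots> = x * ((sinv x * x) * (y * sinv y)) * y" using c by simp
  also have "\<dots> = (x * sinv x * x) * (y * sinv y * y)" by (simp add: mult.assoc)
  also have "\<dots> = x * y" using px py by simp
  finally have r1: "x * y * (sinv y * sinv x) * (x * y) = x * y" .
  have "sinv y * sinv x * (x * y) * (sinv y * sinv x) = sinv y * ((sinv x * x) * (y * sinv y)) * sinv x"
    by (simp add: mult.assoc)
  also have "\<dots> = sinv y * ((y * sinv y) * (sinv x * x)) * sinv x" using c by simp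
  also have "\<dots> = (sinv y * y * sinv y) * (sinv x * x * sinv x)" by (simp add: mult.assoc)
  also have "\<dots> = sinv y * sinv x" using px py by simp
  finally have r2: "sinv y * sinv x * (x * y) * (sinv y * sinv x) = sinv y * sinv x" .
  show ?thesis using sinv_unique[OF I r1 r2] .
qed

lemma sharp_sinv:
  assumes I: "inverse_semigroup TYPE('a::semigroup_mult)" and A: "in_subgroup (a::'a)"
  shows "sharp a = sinv a \<and> a * sinv a = sinv a * a"
proof -
  obtain G e where G: "subgroup_with_identity G e" and aG: "a \<in> G"
    using A unfolding in_subgroup_def is_subgroup_def by blast
  obtain y where yG: "y \<in> G" and ay: "a * y = e" and ya: "y * a = e"
    using G aG unfolding subgroup_with_identity_def by blast
  have ea: "e * a = a" and ey: "e * y = y" using G aG yG unfolding subgroup_with_identity_def by auto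
  have sy: "sinv a = y" using sinv_unique[OF I, of a y] ay ya ea ey by simp
  have P: "\<forall>b. (\<exists>G e. subgroup_with_identity G e \<and> a \<in> G \<and> b \<in> G \<and> a * b = e \<and> b * a = e) \<longrightarrow> b = y"
  proof (intro allI impI)
    fix b assume "\<exists>G e. subgroup_with_identity G e \<and> a \<in> G \<and> b \<in> G \<and> a * b = e \<and> b * a = e"
    then obtain G' e' where "subgroup_with_identity G' e'" "a \<in> G'" "b \<in> G'" "a * b = e'" "b * a = e'"
      by blast
    moreover then have "e' * a = a" "e' * b = b" unfolding subgroup_with_identity_def by auto
    ultimately have "sinv a = b" using sinv_unique[OF I, of a b] by simp
    thus "b = y" using sy by simp
  qed
  have "sharp a = y" unfolding sharp_def
    apply (rule the_equality)
    using G aG yG ay ya apply blast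
    using P by blast
  thus ?thesis using sy ay ya by simp
qed

theorem lemma2p2:
  fixes S :: "'a::semigroup_mult set"
  assumes "inverse_semigroup TYPE('a)"
    and "left_FG_order S"
  shows "straight_left_I_order S"
proof -
  note I = assms(1)
  have sub: "subsemigroup S" and dec: "\<forall>q::'a. \<exists>a\<in>S. \<exists>b\<in>S. in_subgroup a \<and> q = sharp a * b"
    using assms(2) unfolding left_FG_order_def by auto
  have cl: "\<And>x y. x \<in> S \<Longrightarrow> y \<in> S \<Longrightarrow> x * y \<in> S" using sub unfolding subsemigroup_def by blast
  have pr: "\<And>x::'a. x * sinv x * x = x" "\<And>x::'a. sinv x * x * sinv x = sinv x"
    using sinv_prop[OF I] by auto
  have pr': "\<And>x y::'a. x * (sinv x * (x * y)) = x * y" using pr by (metis mult.assoc)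
  have pr'': "\<And>x y::'a. sinv x * (x * (sinv x * y)) = sinv x * y" using pr by (metis mult.assoc)
  have ss: "\<And>x::'a. sinv (sinv x) = x" using sinv_sinv[OF I] by blast
  have sm: "\<And>x y::'a. sinv (x * y) = sinv y * sinv x" using sinv_mult[OF I] by blast
  show ?thesis unfolding straight_left_I_order_def
  proof (intro conjI sub allI)
    fix q :: 'a
    obtain a b where aS: "a \<in> S" and bS: "b \<in> S" and ag: "in_subgroup a" and q: "q = sharp a * b"
      using dec by blast
    have sa: "sharp a = sinv a" and ca: "a * sinv a = sinv a * a" using sharp_sinv[OF I ag] by auto
    define b' where "b' = a * b"
    have b'S: "b' \<in> S" using cl aS bS unfolding b'_def by blast
    obtain u v where uS: "u \<in> S" and vS: "v \<in> S" and ug: "in_subgroup u" and uv: "sinv b' = sharp u * v"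
      using dec by blast
    have su: "sharp u = sinv u" and cu: "u * sinv u = sinv u * u" using sharp_sinv[OF I ug] by auto
    define c where "c = u * (v * (a * a))"
    define d where "d = u * (v * (a * b))"
    have cS: "c \<in> S" and dS: "d \<in> S" unfolding c_def d_def using cl uS vS aS bS by auto
    have q': "q = sinv a * b" using q sa by simp
    have aaa: "a * (a * (sinv a * b)) = a * b" using ca pr(1) by (metis mult.assoc)
    have dcq: "d = c * q" unfolding d_def c_def q' using aaa by (simp add: mult.assoc)
    have b'e: "b' = sinv v * u" using ss[of b'] uv su sm ss by simp
    have bb: "b' * sinv b' = sinv v * (u * sinv u) * v" using b'e sm ss by (simp add: mult.assoc)
    have ic: "sinv c = sinv a * (sinv a * (sinv v * sinv u))" unfolding c_def using sm by (simp add: mult.assoc)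
    have "sinv c * c = sinv a * sinv a * (sinv v * (sinv u * u) * v) * a * a"
      using ic unfolding c_def by (simp add: mult.assoc)
    also have "\<dots> = sinv a * sinv a * (b' * sinv b') * a * a" using bb cu by simp
    also have "\<dots> = (sinv a * (sinv a * a)) * b * sinv b * (sinv a * a * a)"
      unfolding b'_def using sm by (simp add: mult.assoc)
    also have "\<dots> = sinv a * b * sinv b * a"
    proof -
      have "sinv a * (sinv a * a) = sinv a" using ca pr(2) by (metis mult.assoc)
      moreover have "sinv a * a * a = a" using ca pr(1) by (metis mult.assoc)
      ultimately show ?thesis by simp
    qed
    also have "\<dots> = q * sinv q" unfolding q' using sm ss by (simp add: mult.assoc)
    finally have key: "sinv c * c = q * sinv q" .
    have qd: "q = sinv c * d"
    proof -
      have "sinv c * d = sinv c * c * q" using dcq by (simp add: mult.assoc)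
      also have "\<dots> = q" using key pr(1) by simp
      finally show ?thesis by simp
    qed
    have ddc: "d * sinv d = c * sinv c"
    proof -
      have "d * sinv d = c * (q * sinv q) * sinv c" using dcq sm by (simp add: mult.assoc)
      also have "\<dots> = c * sinv c * c * sinv c" using key by (simp add: mult.assoc)
      also have "\<dots> = c * sinv c" using pr(1) by simp
      finally show ?thesis .
    qed
    have g: "greenR c d" unfolding greenR_def
    proof (intro conjI)
      have "c = d * (sinv d * c)" using ddc pr(1)[of c] by (metis mult.assoc)
      thus "\<exists>x. c = rmult d x" by (metis rmult.simps(2))
      have "d = c * (sinv c * d)" using qd dcq pr(1)[of c] by (metis mult.assoc)
      thus "\<exists>y. d = rmult c y" by (metis rmult.simps(2))
    qed
    show "\<exists>a\<in>S. \<exists>b\<in>S. q = sinv a * b \<and> greenR a b" using cS dS qd g by blast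
  qed
qed

end
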